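(* Let $\mathcal{D}[t]\subset\mathcal{H}\subset\mathcal{D}^\times[t^\times]$ be a rigged Hilbert space with $\mathcal{D}[t]$ complete and reflexive, and let $\{\zeta_n\}$ be a sequence in $\mathcal{D}^\times$. If $\{\zeta_n\}$ possesses a biorthogonal sequence $\{\xi_n\}\subset\mathcal{D}$ (i.e. $\langle\zeta_n,\xi_k\rangle=\delta_{n,k}$ for all $n,k$) which is total in $\mathcal{D}$ and Riesz-Fischer-like, then $\{\zeta_n\}$ is a Bessel-like sequence.
   Context: A rigged Hilbert space $\mathcal{D}[t]\subset\mathcal{H}\subset\mathcal{D}^\times[t^\times]$: $\mathcal{D}$ is a dense subspace of the Hilbert space $\mathcal{H}$ with a locally convex topology $t$ finer than the norm topology, $\mathcal{D}^\times$ is the space of continuous conjugate-linear functionals on $\mathcal{D}[t]$ with the strong dual topology $t^\times=\beta(\mathcal{D}^\times,\mathcal{D})$, $\mathcal{H}\subset\mathcal{D}^\times$, and the duality form $\langle\Phi,\eta\rangle$ (value of $\Phi\in\mathcal{D}^\times$ at $\eta\in\mathcal{D}$) extends the inner product. A sequence is total if its linear span is dense in $\mathcal{D}[t]$. $\mathcal{L}(\mathcal{D},\mathcal{D}^\times)$ denotes the continuous linear maps $\mathcal{D}[t]\to\mathcal{D}^\times[t^\times]$. $\mathcal{C}(\mathcal{D},\mathcal{H})$ is the set of $X\in\mathcal{L}(\mathcal{D},\mathcal{D}^\times)$ mapping $\mathcal{D}$ into $\mathcal{H}$ continuously from $\mathcal{D}[t]$ into $\mathcal{H}$. A sequence $\{\xi_n\}\subset\mathcal{D}$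 is Riesz-Fischer-like if for every orthonormal basis $\{e_n\}$ of $\mathcal{H}$ there exists $S\in\mathcal{C}(\mathcal{D},\mathcal{H})$ with $S\xi_n=e_n$ for all $n$. A sequence $\{\zeta_n\}\subset\mathcal{D}^\times$ is Bessel-like if for every bounded subset $\mathcal{M}$ of $\mathcal{D}[t]$, $\sup_{\eta\in\mathcal{M}}\sum_{k=1}^\infty|\langle\zeta_k,\eta\rangle|^2<\infty$. *)

theory Defs
  imports "HOL-Analysis.Analysis"
begin

text \<open>J plays the role of multiplication by the imaginary unit.\<close>

definition complex_structure :: "('h::real_inner \<Rightarrow> 'h) \<Rightarrow> bool" where
  "complex_structure J \<longleftrightarrow> linear J \<and> (\<forall>x. J (J x) = - x) \<and> (\<forall>x y. J x \<bullet> J y = x \<bullet> y)"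

definition cscale :: "('h::real_vector \<Rightarrow> 'h) \<Rightarrow> complex \<Rightarrow> 'h \<Rightarrow> 'h" where
  "cscale J c x = Re c *\<^sub>R x + Im c *\<^sub>R J x"

text \<open>Complex inner product: linear in the first, conjugate-linear in the second argument.\<close>
definition cinner :: "('h::real_inner \<Rightarrow> 'h) \<Rightarrow> 'h \<Rightarrow> 'h \<Rightarrow> complex" where
  "cinner J x y = complex_of_real (x \<bullet> y) + \<i> * complex_of_real (x \<bullet> J y)"

definition csubspace :: "('h::real_vector \<Rightarrow> 'h) \<Rightarrow> 'h set \<Rightarrow> bool" where
  "csubspace J D \<longleftrightarrow> 0 \<in> D \<and> (\<forall>x\<in>D. \<forall>y\<in>D. x + y \<in> D) \<and> (\<forall>c. \<forall>x\<in>D. cscale J c x \<in> D)"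

definition seminorm_on :: "(complex \<Rightarrow> 'a \<Rightarrow> 'a) \<Rightarrow> 'a::plus set \<Rightarrow> ('a \<Rightarrow> real) \<Rightarrow> bool" where
  "seminorm_on sc A p \<longleftrightarrow> (\<forall>x\<in>A. 0 \<le> p x) \<and> (\<forall>x\<in>A. \<forall>y\<in>A. p (x + y) \<le> p x + p y)
     \<and> (\<forall>c. \<forall>x\<in>A. p (sc c x) = cmod c * p x)"

text \<open>q is continuous on A for the locally convex topology generated by the family P.\<close>
definition sn_dominated :: "('a \<Rightarrow> real) set \<Rightarrow> 'a set \<Rightarrow> ('a \<Rightarrow> real) \<Rightarrow> bool" where
  "sn_dominated P A q \<longleftrightarrow> (\<exists>F. F \<subseteq> P \<and> finite F \<and> (\<exists>C. \<forall>x\<in>A. q x \<le> C * (\<Sum>p\<in>F. p x)))"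

definition lc_bounded :: "('a \<Rightarrow> real) set \<Rightarrow> 'a set \<Rightarrow> 'a set \<Rightarrow> bool" where
  "lc_bounded P A M \<longleftrightarrow> M \<subseteq> A \<and> (\<forall>p\<in>P. \<exists>C. \<forall>x\<in>M. p x \<le> C)"

definition lc_complete :: "('a::ab_group_add \<Rightarrow> real) set \<Rightarrow> 'a set \<Rightarrow> bool" where
  "lc_complete P D \<longleftrightarrow> (\<forall>F. F \<noteq> bot \<and> F \<le> principal D \<and>
      (\<forall>p\<in>P. \<forall>\<epsilon>>0. eventually (\<lambda>(x, y). p (x - y) < \<epsilon>) (F \<times>\<^sub>F F))
      \<longrightarrow> (\<exists>x\<in>D. \<forall>p\<in>P. \<forall>\<epsilon>>0. eventually (\<lambda>y. p (y - x) < \<epsilon>) F))"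

text \<open>The Hilbert space H is the whole type; D a dense complex subspace; t is generated by
  the family of seminorms P and is finer than the norm topology.\<close>
definition rigged_hilbert :: "('h::{real_inner,complete_space} \<Rightarrow> 'h) \<Rightarrow> 'h set \<Rightarrow> ('h \<Rightarrow> real) set \<Rightarrow> bool" where
  "rigged_hilbert J D P \<longleftrightarrow> complex_structure J \<and> csubspace J D \<and> closure D = UNIV
     \<and> (\<forall>p\<in>P. seminorm_on (cscale J) D p) \<and> sn_dominated P D norm"

text \<open>D^\<times>: continuous conjugate-linear functionals on D[t] (extended by 0 outside D).\<close>
definition dualx :: "('h::real_inner \<Rightarrow> 'h) \<Rightarrow> 'h set \<Rightarrow> ('h \<Rightarrow> real) set \<Rightarrow> ('h \<Rightarrow> complex) set" where
  "dualx J D P = {\<Phi>. (\<forall>x\<in>D. \<forall>y\<in>D. \<Phi> (x + y) = \<Phi> x + \<Phi> y)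
      \<and> (\<forall>c. \<forall>x\<in>D. \<Phi> (cscale J c x) = cnj c * \<Phi> x)
      \<and> sn_dominated P D (\<lambda>x. cmod (\<Phi> x)) \<and> (\<forall>x. x \<notin> D \<longrightarrow> \<Phi> x = 0)}"

text \<open>Seminorms of the strong dual topology t^\<times> = beta(D^\<times>, D).\<close>
definition strong_dual_sn :: "('h::real_inner \<Rightarrow> 'h) \<Rightarrow> 'h set \<Rightarrow> ('h \<Rightarrow> real) set \<Rightarrow> (('h \<Rightarrow> complex) \<Rightarrow> real) set" where
  "strong_dual_sn J D P = {(\<lambda>\<Phi>. SUP \<eta>\<in>M. cmod (\<Phi> \<eta>)) | M. M \<noteq> {} \<and> lc_bounded P D M}"

definition bidual :: "('h::real_inner \<Rightarrow> 'h) \<Rightarrow> 'h set \<Rightarrow> ('h \<Rightarrow> real) set \<Rightarrow> (('h \<Rightarrow> complex) \<Rightarrow> complex) set" where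
  "bidual J D P = {F. (\<forall>\<Phi>\<in>dualx J D P. \<forall>\<Psi>\<in>dualx J D P. F (\<lambda>x. \<Phi> x + \<Psi> x) = F \<Phi> + F \<Psi>)
      \<and> (\<forall>c. \<forall>\<Phi>\<in>dualx J D P. F (\<lambda>x. c * \<Phi> x) = c * F \<Phi>)
      \<and> sn_dominated (strong_dual_sn J D P) (dualx J D P) (\<lambda>\<Phi>. cmod (F \<Phi>))}"

text \<open>Seminorms of the strong topology beta(D, D^\<times>) on D.\<close>
definition strong_sn_on_D :: "('h::real_inner \<Rightarrow> 'h) \<Rightarrow> 'h set \<Rightarrow> ('h \<Rightarrow> real) set \<Rightarrow> ('h \<Rightarrow> real) set" where
  "strong_sn_on_D J D P = {(\<lambda>\<eta>. SUP \<Phi>\<in>B. cmod (\<Phi> \<eta>)) | B. B \<noteq> {} \<and>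
      lc_bounded (strong_dual_sn J D P) (dualx J D P) B}"

text \<open>Reflexive: the canonical map of D into the dual of D^\<times>[t^\<times>] is onto, and t coincides
  with the strong topology beta(D, D^\<times>) (i.e. the canonical map is a topological
  isomorphism onto the strong bidual).\<close>
definition lc_reflexive :: "('h::real_inner \<Rightarrow> 'h) \<Rightarrow> 'h set \<Rightarrow> ('h \<Rightarrow> real) set \<Rightarrow> bool" where
  "lc_reflexive J D P \<longleftrightarrow> (\<forall>F\<in>bidual J D P. \<exists>\<eta>\<in>D. \<forall>\<Phi>\<in>dualx J D P. F \<Phi> = \<Phi> \<eta>)
     \<and> (\<forall>q\<in>strong_sn_on_D J D P. sn_dominated P D q)
     \<and> (\<forall>p\<in>P. sn_dominated (strong_sn_on_D J D P) D p)"

definition emb :: "('h::real_inner \<Rightarrow> 'h) \<Rightarrow> 'h set \<Rightarrow> 'h \<Rightarrow> ('h \<Rightarrow> complex)" where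
  "emb J D \<xi> = (\<lambda>\<eta>. if \<eta> \<in> D then cinner J \<xi> \<eta> else 0)"

definition total_in :: "('h::real_inner \<Rightarrow> 'h) \<Rightarrow> 'h set \<Rightarrow> ('h \<Rightarrow> real) set \<Rightarrow> (nat \<Rightarrow> 'h) \<Rightarrow> bool" where
  "total_in J D P \<xi> \<longleftrightarrow> (\<forall>x\<in>D. \<forall>F. F \<subseteq> P \<and> finite F \<longrightarrow> (\<forall>\<epsilon>>0. \<exists>n c.
      (\<Sum>p\<in>F. p (x - (\<Sum>i<n. cscale J (c i) (\<xi> i)))) < \<epsilon>))"

definition onb :: "('h::real_inner \<Rightarrow> 'h) \<Rightarrow> (nat \<Rightarrow> 'h) \<Rightarrow> bool" where
  "onb J e \<longleftrightarrow> (\<forall>n m. cinner J (e n) (e m) = (if n = m then 1 else 0))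
     \<and> (\<forall>x. \<forall>\<epsilon>>0. \<exists>n c. norm (x - (\<Sum>i<n. cscale J (c i) (e i))) < \<epsilon>)"

text \<open>C(D,H): elements of L(D,D^\<times>) mapping D into H continuously from D[t] into H.\<close>
definition in_CDH :: "('h::real_inner \<Rightarrow> 'h) \<Rightarrow> 'h set \<Rightarrow> ('h \<Rightarrow> real) set \<Rightarrow> ('h \<Rightarrow> 'h) \<Rightarrow> bool" where
  "in_CDH J D P S \<longleftrightarrow> (\<forall>x\<in>D. \<forall>y\<in>D. S (x + y) = S x + S y)
     \<and> (\<forall>c. \<forall>x\<in>D. S (cscale J c x) = cscale J c (S x))
     \<and> (\<forall>x\<in>D. emb J D (S x) \<in> dualx J D P)
     \<and> (\<forall>q\<in>strong_dual_sn J D P. sn_dominated P D (\<lambda>x. q (emb J D (S x))))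
     \<and> sn_dominated P D (\<lambda>x. norm (S x))"

definition riesz_fischer_like :: "('h::real_inner \<Rightarrow> 'h) \<Rightarrow> 'h set \<Rightarrow> ('h \<Rightarrow> real) set \<Rightarrow> (nat \<Rightarrow> 'h) \<Rightarrow> bool" where
  "riesz_fischer_like J D P \<xi> \<longleftrightarrow> (\<forall>e. onb J e \<longrightarrow> (\<exists>S. in_CDH J D P S \<and> (\<forall>n. S (\<xi> n) = e n)))"

definition bessel_like :: "'h set \<Rightarrow> ('h \<Rightarrow> real) set \<Rightarrow> (nat \<Rightarrow> 'h \<Rightarrow> complex) \<Rightarrow> bool" where
  "bessel_like D P \<zeta> \<longleftrightarrow> (\<forall>M. lc_bounded P D M \<longrightarrow>
     (\<exists>C. \<forall>\<eta>\<in>M. summable (\<lambda>k. (cmod (\<zeta> k \<eta>))\<^sup>2) \<and> (\<Sum>k. (cmod (\<zeta> k \<eta>))\<^sup>2) \<le> C))"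

end

theory Submission
  imports Defs
begin

lemma cs_linear: "complex_structure J \<Longrightarrow> linear J" by (simp add: complex_structure_def)
lemma cs_JJ: "complex_structure J \<Longrightarrow> J (J x) = - x" by (simp add: complex_structure_def)
lemma cs_inner: "complex_structure J \<Longrightarrow> J x \<bullet> J y = x \<bullet> y" by (simp add: complex_structure_def)
lemma cs_swap: assumes "complex_structure J" shows "x \<bullet> J y = - (J x \<bullet> y)"
proof -
  have "x \<bullet> J y = J x \<bullet> J (J y)" using cs_inner[OF assms] by simp
  also have "\<dots> = - (J x \<bullet> y)" using cs_JJ[OF assms] by simp
  finally show ?thesis .
qed
lemma cs_self: assumes "complex_structure J" shows "x \<bullet> J x = 0"
proof -
  have "x \<bullet> J x = - (J x \<bullet> x)" by (rule cs_swap[OF assms])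
  then show ?thesis by (simp add: inner_commute)
qed
lemma cs_norm: assumes "complex_structure J" shows "norm (J x) = norm x"
  using cs_inner[OF assms, of x x] by (simp add: norm_eq_sqrt_inner)

lemma sum_ortho:
  fixes e :: "nat \<Rightarrow> 'h::real_inner"
  assumes cs: "complex_structure J"
    and o1: "\<And>k j. k < N \<Longrightarrow> j < N \<Longrightarrow> e k \<bullet> e j = (if k = j then 1 else 0)"
    and o2: "\<And>k j. k < N \<Longrightarrow> j < N \<Longrightarrow> e k \<bullet> J (e j) = 0"
    and m: "m < N"
  shows "(\<Sum>k<N. a k *\<^sub>R e k + b k *\<^sub>R J (e k)) \<bullet> e m = a m"
    and "(\<Sum>k<N. a k *\<^sub>R e k + b k *\<^sub>R J (e k)) \<bullet> J (e m) = b m"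
proof -
  have "(\<Sum>k<N. a k *\<^sub>R e k + b k *\<^sub>R J (e k)) \<bullet> e m = (\<Sum>k<N. if k = m then a k else 0)"
    unfolding inner_sum_left
  proof (rule sum.cong[OF refl])
    fix k assume k: "k \<in> {..<N}"
    have "J (e k) \<bullet> e m = - (e k \<bullet> J (e m))" using cs_swap[OF cs, of "e k" "e m"]
      by simp
    then show "(a k *\<^sub>R e k + b k *\<^sub>R J (e k)) \<bullet> e m = (if k = m then a k else 0)"
      using o1[of k m] o2[of k m] k m by (simp add: inner_add_left)
  qed
  then show "(\<Sum>k<N. a k *\<^sub>R e k + b k *\<^sub>R J (e k)) \<bullet> e m = a m" using m by simp
  have "(\<Sum>k<N. a k *\<^sub>R e k + b k *\<^sub>R J (e k)) \<bullet> J (e m) = (\<Sum>k<N. if k = m then b k else 0)"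
    unfolding inner_sum_left
  proof (rule sum.cong[OF refl])
    fix k assume k: "k \<in> {..<N}"
    show "(a k *\<^sub>R e k + b k *\<^sub>R J (e k)) \<bullet> J (e m) = (if k = m then b k else 0)"
      using o1[of k m] o2[of k m] k m cs_inner[OF cs, of "e k" "e m"] by (simp add: inner_add_left)
  qed
  then show "(\<Sum>k<N. a k *\<^sub>R e k + b k *\<^sub>R J (e k)) \<bullet> J (e m) = b m" using m by simp
qed

lemma span_J_closed:
  assumes cs: "complex_structure J" and S: "\<forall>v\<in>S. J v \<in> span S" and x: "x \<in> span S"
  shows "J x \<in> span S"
proof -
  have "J ` span S = span (J ` S)" by (rule span_linear_image[OF cs_linear[OF cs], symmetric])
  also have "\<dots> \<subseteq> span S" using S by (simp add: image_subset_iff span_minimal)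
  finally show ?thesis using x by blast
qed

fun gs :: "('h::real_inner \<Rightarrow> 'h) \<Rightarrow> (nat \<Rightarrow> 'h) \<Rightarrow> nat \<Rightarrow> 'h" where
"gs J \<xi> n = (let f = \<xi> n - (\<Sum>k<n. (\<xi> n \<bullet> gs J \<xi> k) *\<^sub>R gs J \<xi> k + (\<xi> n \<bullet> J (gs J \<xi> k)) *\<^sub>R J (gs J \<xi> k)) in f /\<^sub>R norm f)"
declare gs.simps[simp del]

definition XX :: "('h \<Rightarrow> 'h) \<Rightarrow> (nat \<Rightarrow> 'h) \<Rightarrow> nat \<Rightarrow> 'h set" where
  "XX J v m = (\<Union>k<m. {v k, J (v k)})"

lemma XX_J: assumes cs: "complex_structure J" shows "\<forall>v\<in>XX J w m. J v \<in> span (XX J w m)"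
  unfolding XX_def using cs_JJ[OF cs]
  by (auto intro: span_base span_neg)

lemma XX_mono: "m \<le> n \<Longrightarrow> span (XX J w m) \<subseteq> span (XX J w n)"
  unfolding XX_def by (intro span_mono UN_mono) auto

lemma gs_props:
  fixes \<xi> :: "nat \<Rightarrow> 'h::real_inner"
  assumes cs: "complex_structure J" and indep: "\<And>n. \<xi> n \<notin> span (XX J \<xi> n)"
  shows "norm (gs J \<xi> n) = 1 \<and> (\<forall>k<n. gs J \<xi> n \<bullet> gs J \<xi> k = 0 \<and> gs J \<xi> n \<bullet> J (gs J \<xi> k) = 0)
     \<and> gs J \<xi> n \<in> span (XX J \<xi> (Suc n))"
proof (induction n rule: less_induct)
  case (less n)
  define e where "e = gs J \<xi>"
  have IH: "\<And>k. k < n \<Longrightarrow> norm (e k) = 1 \<and> (\<forall>j<k. e k \<bullet> e j = 0 \<and> e k \<bullet> J (e j) = 0)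
     \<and> e k \<in> span (XX J \<xi> (Suc k))" using less e_def by blast
  have o1: "e k \<bullet> e j = (if k = j then 1 else 0)" if "k < n" "j < n" for k j
  proof -
    consider "k = j" | "j < k" | "k < j" by linarith
    then show ?thesis
    proof cases
      case 1 then show ?thesis using IH[OF that(1)] by (simp add: norm_eq_sqrt_inner)
    next
      case 2 then show ?thesis using IH[OF that(1)] by simp
    next
      case 3 then have "e j \<bullet> e k = 0" using IH[OF that(2)] by simp
      then show ?thesis using 3 by (simp add: inner_commute)
    qed
  qed
  have o2: "e k \<bullet> J (e j) = 0" if "k < n" "j < n" for k j
  proof -
    consider "k = j" | "j < k" | "k < j" by linarith
    then show ?thesis
    proof cases
      case 1 then show ?thesis using cs_self[OF cs] by simp
    next
      case 2 then show ?thesis using IH[OF that(1)] by simp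
    next
      case 3 then show ?thesis using IH[OF that(2)] cs_swap[OF cs, of "e k" "e j"]
        by (simp add: inner_commute)
    qed
  qed
  define w where "w = (\<Sum>k<n. (\<xi> n \<bullet> e k) *\<^sub>R e k + (\<xi> n \<bullet> J (e k)) *\<^sub>R J (e k))"
  define f where "f = \<xi> n - w"
  have en: "e n = f /\<^sub>R norm f" unfolding e_def f_def w_def by (subst gs.simps) (simp add: Let_def)
  have wspan: "w \<in> span (XX J \<xi> n)"
    unfolding w_def
  proof (intro span_sum span_add span_scale)
    fix k assume k: "k \<in> {..<n}"
    have ek: "e k \<in> span (XX J \<xi> n)" using IH[of k] k XX_mono[of "Suc k" n J \<xi>] by auto
    then show "e k \<in> span (XX J \<xi> n)" .
    show "J (e k) \<in> span (XX J \<xi> n)" by (rule span_J_closed[OF cs XX_J[OF cs] ek])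
  qed
  have fnz: "f \<noteq> 0"
  proof
    assume "f = 0"
    then have "\<xi> n = w" by (simp add: f_def)
    then show False using wspan indep[of n] by simp
  qed
  have n1: "norm (e n) = 1" using en fnz by simp
  have fo: "f \<bullet> e k = 0 \<and> f \<bullet> J (e k) = 0" if k: "k < n" for k
    using sum_ortho[OF cs o1 o2 k, of "\<lambda>k. \<xi> n \<bullet> e k" "\<lambda>k. \<xi> n \<bullet> J (e k)"]
    by (simp add: f_def w_def[symmetric] inner_diff_left)
  have "\<forall>k<n. e n \<bullet> e k = 0 \<and> e n \<bullet> J (e k) = 0" using fo en by simp
  moreover have "e n \<in> span (XX J \<xi> (Suc n))"
  proof -
    have "\<xi> n \<in> span (XX J \<xi> (Suc n))" by (rule span_base) (auto simp: XX_def)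
    moreover have "w \<in> span (XX J \<xi> (Suc n))" using wspan XX_mono[of n "Suc n" J \<xi>] by auto
    ultimately show ?thesis unfolding en f_def by (intro span_scale span_diff)
  qed
  ultimately show ?case using n1 e_def by simp
qed

lemma gs_xi:
  fixes \<xi> :: "nat \<Rightarrow> 'h::real_inner"
  assumes cs: "complex_structure J" and indep: "\<And>n. \<xi> n \<notin> span (XX J \<xi> n)"
  shows "\<xi> n \<in> span (XX J (gs J \<xi>) (Suc n))"
proof -
  define e where "e = gs J \<xi>"
  define w where "w = (\<Sum>k<n. (\<xi> n \<bullet> e k) *\<^sub>R e k + (\<xi> n \<bullet> J (e k)) *\<^sub>R J (e k))"
  define f where "f = \<xi> n - w"
  have en: "e n = f /\<^sub>R norm f" unfolding e_def f_def w_def by (subst gs.simps) (simp add: Let_def)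
  have "norm (e n) = 1" using gs_props[OF cs indep] e_def by blast
  then have fnz: "f \<noteq> 0" using en by auto
  have xi: "\<xi> n = norm f *\<^sub>R e n + w" using en fnz f_def by simp
  have "w \<in> span (XX J e (Suc n))" unfolding w_def
    by (intro span_sum span_add span_scale span_base) (auto simp: XX_def)
  moreover have "e n \<in> span (XX J e (Suc n))" by (intro span_base) (auto simp: XX_def)
  ultimately show ?thesis unfolding e_def[symmetric] xi by (intro span_add span_scale)
qed


lemma cscale_simps:
  "cscale J (c + d) x = cscale J c x + cscale J d x"
  "r *\<^sub>R cscale J c x = cscale J (complex_of_real r * c) x"
  "cscale J 0 x = 0" "cscale J 1 x = x" "cscale J \<i> x = J x"
  "cscale J (complex_of_real r) x = r *\<^sub>R x"
  by (auto simp: cscale_def algebra_simps)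

lemma span_rep:
  assumes cs: "complex_structure J" and y: "y \<in> span (XX J e n)"
  shows "\<exists>c. y = (\<Sum>i<n. cscale J (c i) (e i))"
proof -
  define R where "R = {y. \<exists>c. y = (\<Sum>i<n. cscale J (c i) (e i))}"
  have "subspace R" unfolding subspace_def R_def
  proof (intro conjI ballI allI)
    show "0 \<in> {y. \<exists>c. y = (\<Sum>i<n. cscale J (c i) (e i))}"
      by (rule CollectI, rule exI[of _ "\<lambda>_. 0"]) (simp add: cscale_simps)
  next
    fix x y assume "x \<in> {y. \<exists>c. y = (\<Sum>i<n. cscale J (c i) (e i))}" "y \<in> {y. \<exists>c. y = (\<Sum>i<n. cscale J (c i) (e i))}"
    then obtain c d where "x = (\<Sum>i<n. cscale J (c i) (e i))" "y = (\<Sum>i<n. cscale J (d i) (e i))" by auto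
    then show "x + y \<in> {y. \<exists>c. y = (\<Sum>i<n. cscale J (c i) (e i))}"
      by (intro CollectI exI[of _ "\<lambda>i. c i + d i"]) (simp add: cscale_simps sum.distrib)
  next
    fix r :: real and x assume "x \<in> {y. \<exists>c. y = (\<Sum>i<n. cscale J (c i) (e i))}"
    then obtain c where "x = (\<Sum>i<n. cscale J (c i) (e i))" by auto
    then show "r *\<^sub>R x \<in> {y. \<exists>c. y = (\<Sum>i<n. cscale J (c i) (e i))}"
      by (intro CollectI exI[of _ "\<lambda>i. complex_of_real r * c i"]) (simp add: cscale_simps scaleR_sum_right)
  qed
  moreover have "XX J e n \<subseteq> R"
  proof
    fix v assume "v \<in> XX J e n"
    then obtain k where k: "k < n" and v0: "v = e k \<or> v = J (e k)"
      unfolding XX_def by blast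
    obtain a where v: "v = cscale J a (e k)"
      using v0 cscale_simps(4)[of J "e k"] cscale_simps(5)[of J "e k"] by metis
    have "(\<Sum>i<n. cscale J (if i = k then a else 0) (e i)) = (\<Sum>i<n. if i = k then cscale J a (e k) else 0)"
      by (rule sum.cong) (auto simp: cscale_simps)
    also have "\<dots> = v" using k v by simp
    finally show "v \<in> R" unfolding R_def by (intro CollectI exI[of _ "\<lambda>i. if i = k then a else 0"]) simp
  qed
  ultimately have "span (XX J e n) \<subseteq> R" by (rule span_minimal[rotated])
  then show ?thesis using y R_def by auto
qed

lemma D_facts:
  assumes "csubspace J D"
  shows "0 \<in> D" "x \<in> D \<Longrightarrow> y \<in> D \<Longrightarrow> x + y \<in> D" "x \<in> D \<Longrightarrow> cscale J c x \<in> D"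
    "x \<in> D \<Longrightarrow> y \<in> D \<Longrightarrow> x - y \<in> D" "x \<in> D \<Longrightarrow> r *\<^sub>R x \<in> D" "x \<in> D \<Longrightarrow> J x \<in> D"
proof -
  show "0 \<in> D" using assms by (simp add: csubspace_def)
  show a: "x \<in> D \<Longrightarrow> y \<in> D \<Longrightarrow> x + y \<in> D" for x y using assms by (simp add: csubspace_def)
  show c: "x \<in> D \<Longrightarrow> cscale J c x \<in> D" for x c using assms by (simp add: csubspace_def)
  show "x \<in> D \<Longrightarrow> r *\<^sub>R x \<in> D" using c[of x "complex_of_real r"] by (simp add: cscale_simps)
  show "x \<in> D \<Longrightarrow> J x \<in> D" using c[of x \<i>] by (simp add: cscale_simps)
  show "x \<in> D \<Longrightarrow> y \<in> D \<Longrightarrow> x - y \<in> D" using a[of x "cscale J (-1) y"] c[of y "-1"]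
    by (simp add: cscale_def)
qed

lemma D_sum:
  assumes "csubspace J D" "\<forall>i. \<xi> i \<in> D"
  shows "(\<Sum>i<(m::nat). cscale J (c i) (\<xi> i)) \<in> D"
  by (induction m) (use assms D_facts[OF assms(1)] in auto)

lemma indep:
  assumes csub: "csubspace J D" and z: "\<zeta> n \<in> dualx J D P" and xi: "\<forall>n. \<xi> n \<in> D"
    and bi: "\<forall>n k. \<zeta> n (\<xi> k) = (if n = k then 1 else 0)"
  shows "\<xi> n \<notin> span (XX J \<xi> n)"
proof
  assume a: "\<xi> n \<in> span (XX J \<xi> n)"
  have add: "\<And>x y. x \<in> D \<Longrightarrow> y \<in> D \<Longrightarrow> \<zeta> n (x + y) = \<zeta> n x + \<zeta> n y"
    and hom: "\<And>c x. x \<in> D \<Longrightarrow> \<zeta> n (cscale J c x) = cnj c * \<zeta> n x"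
    using z by (auto simp: dualx_def)
  define Z where "Z = {x \<in> D. \<zeta> n x = 0}"
  have "subspace Z" unfolding subspace_def Z_def
  proof (intro conjI ballI allI)
    have "\<zeta> n 0 = \<zeta> n 0 + \<zeta> n 0" using add[of 0 0] D_facts(1)[OF csub] by simp
    then show "0 \<in> {x \<in> D. \<zeta> n x = 0}" using D_facts(1)[OF csub] by simp
  next
    fix x y assume "x \<in> {x \<in> D. \<zeta> n x = 0}" "y \<in> {x \<in> D. \<zeta> n x = 0}"
    then show "x + y \<in> {x \<in> D. \<zeta> n x = 0}" using add D_facts(2)[OF csub] by auto
  next
    fix r :: real and x assume "x \<in> {x \<in> D. \<zeta> n x = 0}"
    then show "r *\<^sub>R x \<in> {x \<in> D. \<zeta> n x = 0}" using hom[of x "complex_of_real r"] D_facts(5)[OF csub]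
      by (auto simp: cscale_simps)
  qed
  moreover have "XX J \<xi> n \<subseteq> Z"
  proof
    fix v assume "v \<in> XX J \<xi> n"
    then obtain k where k: "k < n" and v: "v = \<xi> k \<or> v = J (\<xi> k)" unfolding XX_def by auto
    have "\<zeta> n (\<xi> k) = 0" using bi k by simp
    moreover have "\<zeta> n (J (\<xi> k)) = 0" using hom[of "\<xi> k" \<i>] xi \<open>\<zeta> n (\<xi> k) = 0\<close> by (simp add: cscale_simps)
    ultimately show "v \<in> Z" using v xi D_facts(6)[OF csub] Z_def by auto
  qed
  ultimately have "span (XX J \<xi> n) \<subseteq> Z" by (rule span_minimal[rotated])
  then show False using a bi Z_def by auto
qed

lemma cinner_add_right: "complex_structure J \<Longrightarrow> cinner J u (v + w) = cinner J u v + cinner J u w"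
  by (simp add: cinner_def linear_add[OF cs_linear] inner_add_right algebra_simps)

lemma cinner_cscale_right: assumes cs: "complex_structure J"
  shows "cinner J u (cscale J c v) = cnj c * cinner J u v"
proof -
  have jc: "J (cscale J c v) = Re c *\<^sub>R J v - Im c *\<^sub>R v"
    by (simp add: cscale_def linear_add[OF cs_linear[OF cs]] linear_scale[OF cs_linear[OF cs]] cs_JJ[OF cs])
  have "cinner J u (cscale J c v) = complex_of_real (u \<bullet> cscale J c v) + \<i> * complex_of_real (u \<bullet> (Re c *\<^sub>R J v - Im c *\<^sub>R v))"
    by (simp only: cinner_def jc)
  also have "\<dots> = cnj c * cinner J u v"
    unfolding cinner_def
    by (rule complex_eqI) (simp_all add: cscale_def inner_add_right inner_diff_right algebra_simps)
  finally show ?thesis .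
qed

lemma cinner_bound: assumes cs: "complex_structure J"
  shows "cmod (cinner J u v) \<le> 2 * norm u * norm v"
proof -
  have "cmod (cinner J u v) \<le> \<bar>u \<bullet> v\<bar> + \<bar>u \<bullet> J v\<bar>"
    unfolding cinner_def using norm_triangle_ineq[of "complex_of_real (u \<bullet> v)" "\<i> * complex_of_real (u \<bullet> J v)"]
    by (simp add: norm_mult)
  also have "\<dots> \<le> norm u * norm v + norm u * norm (J v)"
    by (intro add_mono Cauchy_Schwarz_ineq2)
  finally show ?thesis using cs_norm[OF cs] by simp
qed

lemma bessel:
  fixes e :: "nat \<Rightarrow> 'h::real_inner"
  assumes cs: "complex_structure J"
    and o1: "\<And>k j. e k \<bullet> e j = (if k = j then 1 else 0)"
    and o2: "\<And>k j. e k \<bullet> J (e j) = 0"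
  shows "(\<Sum>n<N. (cmod (cinner J (e n) v))\<^sup>2) \<le> (norm v)\<^sup>2"
proof -
  define a where "a n = v \<bullet> e n" for n
  define b where "b n = v \<bullet> J (e n)" for n
  define w where "w = (\<Sum>k<N. a k *\<^sub>R e k + b k *\<^sub>R J (e k))"
  have c2: "(cmod (cinner J (e n) v))\<^sup>2 = (a n)\<^sup>2 + (b n)\<^sup>2" for n
  proof -
    have "e n \<bullet> J v = - b n" using cs_swap[OF cs, of "e n" v] by (simp add: b_def inner_commute)
    then show ?thesis by (simp add: cmod_power2 cinner_def a_def inner_commute)
  qed
  have we: "w \<bullet> e m = a m" "w \<bullet> J (e m) = b m" if "m < N" for m
    using sum_ortho[OF cs _ _ that, of e a b] o1 o2 by (auto simp: w_def)
  have ww: "w \<bullet> w = (\<Sum>m<N. (a m)\<^sup>2 + (b m)\<^sup>2)"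
    by (subst (2) w_def) (simp add: inner_sum_right inner_add_right we power2_eq_square)
  have vw: "v \<bullet> w = (\<Sum>m<N. (a m)\<^sup>2 + (b m)\<^sup>2)"
    by (simp add: w_def inner_sum_right inner_add_right a_def b_def power2_eq_square)
  have "0 \<le> (v - w) \<bullet> (v - w)" by simp
  also have "\<dots> = v \<bullet> v - 2 * (v \<bullet> w) + w \<bullet> w" by (simp add: inner_diff_left inner_diff_right inner_commute)
  finally have "(\<Sum>m<N. (a m)\<^sup>2 + (b m)\<^sup>2) \<le> v \<bullet> v" using ww vw by simp
  moreover have "(\<Sum>n<N. (cmod (cinner J (e n) v))\<^sup>2) = (\<Sum>m<N. (a m)\<^sup>2 + (b m)\<^sup>2)"
    by (rule sum.cong[OF refl]) (rule c2)
  ultimately show ?thesis using power2_norm_eq_inner[of v] by simp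
qed


lemma total_vanish:
  assumes csub: "csubspace J D" and pn: "\<forall>p\<in>P. \<forall>x\<in>D. 0 \<le> p x" and xi: "\<forall>n. \<xi> n \<in> D"
    and tot: "total_in J D P \<xi>"
    and add: "\<And>x y. x \<in> D \<Longrightarrow> y \<in> D \<Longrightarrow> \<psi> (x + y) = \<psi> x + \<psi> y"
    and hom: "\<And>c x. x \<in> D \<Longrightarrow> \<psi> (cscale J c x) = cnj c * \<psi> x"
    and z: "\<And>k. \<psi> (\<xi> k) = 0"
    and F: "F \<subseteq> P" "finite F" and dom: "\<And>x. x \<in> D \<Longrightarrow> cmod (\<psi> x) \<le> C * (\<Sum>p\<in>F. p x)"
    and x: "x \<in> D"
  shows "\<psi> x = (0::complex)"
proof -
  have psi0: "\<psi> 0 = 0" using add[of 0 0] D_facts(1)[OF csub] by simp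
  have ysum: "\<psi> (\<Sum>i<m. cscale J (c i) (\<xi> i)) = 0" for m :: nat and c
  proof (induction m)
    case 0 then show ?case using psi0 by simp
  next
    case (Suc m)
    have "\<psi> (\<Sum>i<Suc m. cscale J (c i) (\<xi> i)) = \<psi> (\<Sum>i<m. cscale J (c i) (\<xi> i)) + \<psi> (cscale J (c m) (\<xi> m))"
      using add D_sum[OF csub xi] D_facts(3)[OF csub] xi by simp
    also have "\<dots> = 0" using Suc hom[of "\<xi> m" "c m"] xi z by simp
    finally show ?case .
  qed
  have bnd: "cmod (\<psi> x) \<le> (\<bar>C\<bar> + 1) * \<epsilon>" if ep: "\<epsilon> > 0" for \<epsilon>
  proof -
    obtain m c where mc: "(\<Sum>p\<in>F. p (x - (\<Sum>i<m. cscale J (c i) (\<xi> i)))) < \<epsilon>"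
      using tot x F ep unfolding total_in_def by blast
    define y where "y = (\<Sum>i<m. cscale J (c i) (\<xi> i))"
    have yD: "y \<in> D" unfolding y_def by (rule D_sum[OF csub xi])
    have xyD: "x - y \<in> D" using D_facts(4)[OF csub x yD] .
    have "\<psi> x = \<psi> ((x - y) + y)" by simp
    also have "\<dots> = \<psi> (x - y)" using add[OF xyD yD] ysum y_def by simp
    finally have px: "\<psi> x = \<psi> (x - y)" .
    define s where "s = (\<Sum>p\<in>F. p (x - y))"
    have s0: "0 \<le> s" unfolding s_def using pn F xyD by (intro sum_nonneg) auto
    have "cmod (\<psi> x) \<le> C * s" using dom[OF xyD] px s_def by simp
    also have "\<dots> \<le> \<bar>C\<bar> * s" using s0 by (simp add: mult_right_mono)
    also have "\<dots> \<le> (\<bar>C\<bar> + 1) * \<epsilon>" using s0 mc y_def s_def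
      by (intro mult_mono) auto
    finally show ?thesis .
  qed
  show ?thesis
  proof (rule ccontr)
    assume "\<psi> x \<noteq> 0"
    then have a: "cmod (\<psi> x) > 0" by simp
    define \<epsilon> where "\<epsilon> = cmod (\<psi> x) / (2 * (\<bar>C\<bar> + 1))"
    have "\<epsilon> > 0" using a by (simp add: \<epsilon>_def add_pos_nonneg)
    have cp: "\<bar>C\<bar> + 1 > 0" by (simp add: add_pos_nonneg)
    have "(\<bar>C\<bar> + 1) * \<epsilon> = cmod (\<psi> x) / 2" unfolding \<epsilon>_def using cp by (simp add: field_simps)
    with bnd[OF \<open>\<epsilon> > 0\<close>] have "cmod (\<psi> x) \<le> cmod (\<psi> x) / 2" by simp
    then show False using a by simp
  qed
qed

theorem proposition2p17:
  fixes J :: "'h::{real_inner,complete_space} \<Rightarrow> 'h"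
    and D :: "'h set" and P :: "('h \<Rightarrow> real) set"
    and \<zeta> :: "nat \<Rightarrow> 'h \<Rightarrow> complex" and \<xi> :: "nat \<Rightarrow> 'h"
  assumes "rigged_hilbert J D P"
    and "lc_complete P D"
    and "lc_reflexive J D P"
    and "\<forall>n. \<zeta> n \<in> dualx J D P"
    and "\<forall>n. \<xi> n \<in> D"
    and "\<forall>n k. \<zeta> n (\<xi> k) = (if n = k then 1 else 0)"
    and "total_in J D P \<xi>"
    and "riesz_fischer_like J D P \<xi>"
  shows "bessel_like D P \<zeta>"
proof -
  note zd = assms(4) and xi = assms(5) and bi = assms(6) and tot = assms(7)
  have cs: "complex_structure J" and csub: "csubspace J D" and dense: "closure D = UNIV"
    and sem: "\<forall>p\<in>P. seminorm_on (cscale J) D p" and ndom: "sn_dominated P D norm"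
    using assms(1) by (auto simp: rigged_hilbert_def)
  have pn: "\<forall>p\<in>P. \<forall>x\<in>D. 0 \<le> p x" using sem by (auto simp: seminorm_on_def)
  have sumnn: "0 \<le> (\<Sum>p\<in>F. p x)" if "F \<subseteq> P" "x \<in> D" for F x
    using pn that by (intro sum_nonneg) auto
  have ind: "\<And>n. \<xi> n \<notin> span (XX J \<xi> n)" using indep[OF csub _ xi bi] zd by blast
  define e where "e = gs J \<xi>"
  have gp: "norm (e n) = 1 \<and> (\<forall>k<n. e n \<bullet> e k = 0 \<and> e n \<bullet> J (e k) = 0)" for n
    using gs_props[OF cs ind] e_def by blast
  have o1: "e k \<bullet> e j = (if k = j then 1 else 0)" for k j
  proof -
    consider "k = j" | "j < k" | "k < j" by linarith
    then show ?thesis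
    proof cases
      case 1 then show ?thesis using gp[of k] by (simp add: norm_eq_sqrt_inner)
    next
      case 2 then show ?thesis using gp[of k] by simp
    next
      case 3 then have "e j \<bullet> e k = 0" using gp[of j] by simp
      then show ?thesis using 3 by (simp add: inner_commute)
    qed
  qed
  have o2: "e k \<bullet> J (e j) = 0" for k j
  proof -
    consider "k = j" | "j < k" | "k < j" by linarith
    then show ?thesis
    proof cases
      case 1 then show ?thesis using cs_self[OF cs] by simp
    next
      case 2 then show ?thesis using gp[of k] by simp
    next
      case 3 then show ?thesis using gp[of j] cs_swap[OF cs, of "e k" "e j"]
        by (simp add: inner_commute)
    qed
  qed
  have onbe: "onb J e"
    unfolding onb_def
  proof (intro conjI allI impI)
    fix n m show "cinner J (e n) (e m) = (if n = m then 1 else 0)"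
      by (simp add: cinner_def o1 o2)
  next
    fix x :: 'h and \<epsilon> :: real assume ep: "\<epsilon> > 0"
    obtain d where dD: "d \<in> D" and dd: "dist d x < \<epsilon> / 2"
      using dense closure_approachable[of x D] ep by (metis UNIV_I half_gt_zero)
    obtain F0 C0 where F0: "F0 \<subseteq> P" "finite F0" and C0: "\<forall>y\<in>D. norm y \<le> C0 * (\<Sum>p\<in>F0. p y)"
      using ndom unfolding sn_dominated_def by blast
    have "\<epsilon> / (2 * (\<bar>C0\<bar> + 1)) > 0" using ep by (simp add: add_pos_nonneg)
    then obtain m c where mc: "(\<Sum>p\<in>F0. p (d - (\<Sum>i<m. cscale J (c i) (\<xi> i)))) < \<epsilon> / (2 * (\<bar>C0\<bar> + 1))"
      using tot dD F0 unfolding total_in_def by blast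
    define y where "y = (\<Sum>i<m. cscale J (c i) (\<xi> i))"
    have yD: "y \<in> D" unfolding y_def by (rule D_sum[OF csub xi])
    have dyD: "d - y \<in> D" using D_facts(4)[OF csub dD yD] .
    define s where "s = (\<Sum>p\<in>F0. p (d - y))"
    have s0: "0 \<le> s" unfolding s_def using sumnn F0 dyD by blast
    have "norm (d - y) \<le> C0 * s" using C0 dyD s_def by blast
    also have "\<dots> \<le> \<bar>C0\<bar> * s" using s0 by (simp add: mult_right_mono)
    also have "\<dots> \<le> (\<bar>C0\<bar> + 1) * (\<epsilon> / (2 * (\<bar>C0\<bar> + 1)))"
      using s0 mc y_def s_def by (intro mult_mono) auto
    also have "\<dots> = \<epsilon> / 2"
    proof -
      have cp: "\<bar>C0\<bar> + 1 > 0" by (simp add: add_pos_nonneg)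
      then show ?thesis by (simp add: field_simps)
    qed
    finally have dy: "norm (d - y) \<le> \<epsilon> / 2" .
    have "y \<in> span (XX J e m)" unfolding y_def
    proof (intro span_sum)
      fix i assume i: "i \<in> {..<m}"
      have xs: "\<xi> i \<in> span (XX J e m)"
        using gs_xi[OF cs ind, of i] XX_mono[of "Suc i" m J e] i e_def by auto
      have "J (\<xi> i) \<in> span (XX J e m)" by (rule span_J_closed[OF cs XX_J[OF cs] xs])
      then show "cscale J (c i) (\<xi> i) \<in> span (XX J e m)"
        unfolding cscale_def using xs by (intro span_add span_scale)
    qed
    then obtain c' where yc: "y = (\<Sum>i<m. cscale J (c' i) (e i))" using span_rep[OF cs] by blast
    have "norm (x - y) \<le> norm (x - d) + norm (d - y)" by (rule norm_diff_triangle_le[of _ d]) simp_all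
    also have "\<dots> < \<epsilon>" using dd dy by (simp add: dist_norm norm_minus_commute)
    finally show "\<exists>n c. norm (x - (\<Sum>i<n. cscale J (c i) (e i))) < \<epsilon>" using yc by blast
  qed
  obtain S where S: "in_CDH J D P S" and Se: "\<And>n. S (\<xi> n) = e n"
    using assms(8) onbe unfolding riesz_fischer_like_def by blast
  have Sadd: "\<And>x y. x \<in> D \<Longrightarrow> y \<in> D \<Longrightarrow> S (x + y) = S x + S y"
    and Shom: "\<And>c x. x \<in> D \<Longrightarrow> S (cscale J c x) = cscale J c (S x)"
    and Sdom: "sn_dominated P D (\<lambda>x. norm (S x))"
    using S unfolding in_CDH_def by auto
  obtain F1 C1 where F1: "F1 \<subseteq> P" "finite F1" and C1: "\<forall>y\<in>D. norm (S y) \<le> C1 * (\<Sum>p\<in>F1. p y)"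
    using Sdom unfolding sn_dominated_def by blast
  have eq: "\<zeta> n \<eta> = cinner J (e n) (S \<eta>)" if \<eta>: "\<eta> \<in> D" for n \<eta>
  proof -
    have zadd: "\<And>x y. x \<in> D \<Longrightarrow> y \<in> D \<Longrightarrow> \<zeta> n (x + y) = \<zeta> n x + \<zeta> n y"
      and zhom: "\<And>c x. x \<in> D \<Longrightarrow> \<zeta> n (cscale J c x) = cnj c * \<zeta> n x"
      and zdom: "sn_dominated P D (\<lambda>x. cmod (\<zeta> n x))"
      using zd by (auto simp: dualx_def)
    obtain F2 C2 where F2: "F2 \<subseteq> P" "finite F2" and C2: "\<forall>y\<in>D. cmod (\<zeta> n y) \<le> C2 * (\<Sum>p\<in>F2. p y)"
      using zdom unfolding sn_dominated_def by blast
    define \<psi> where "\<psi> x = \<zeta> n x - cinner J (e n) (S x)" for x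
    have "\<psi> \<eta> = 0"
    proof (rule total_vanish[OF csub pn xi tot, of \<psi> "F1 \<union> F2" "\<bar>C2\<bar> + 2 * \<bar>C1\<bar>"])
      fix x y assume "x \<in> D" "y \<in> D"
      then show "\<psi> (x + y) = \<psi> x + \<psi> y"
        by (simp add: \<psi>_def zadd Sadd cinner_add_right[OF cs])
    next
      fix c x assume "x \<in> D"
      then show "\<psi> (cscale J c x) = cnj c * \<psi> x"
        by (simp add: \<psi>_def zhom Shom cinner_cscale_right[OF cs] algebra_simps)
    next
      fix k show "\<psi> (\<xi> k) = 0" using bi by (simp add: \<psi>_def Se cinner_def o1 o2)
    next
      show "F1 \<union> F2 \<subseteq> P" "finite (F1 \<union> F2)" using F1 F2 by auto
    next
      fix x assume x: "x \<in> D"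
      have s1: "(\<Sum>p\<in>F1. p x) \<le> (\<Sum>p\<in>F1 \<union> F2. p x)"
        using F1 F2 pn x by (intro sum_mono2) auto
      have s2: "(\<Sum>p\<in>F2. p x) \<le> (\<Sum>p\<in>F1 \<union> F2. p x)"
        using F1 F2 pn x by (intro sum_mono2) auto
      have n1: "0 \<le> (\<Sum>p\<in>F1. p x)" "0 \<le> (\<Sum>p\<in>F2. p x)" using sumnn F1 F2 x by auto
      have "cmod (\<psi> x) \<le> cmod (\<zeta> n x) + cmod (cinner J (e n) (S x))"
        unfolding \<psi>_def by (rule norm_triangle_ineq4)
      also have "\<dots> \<le> C2 * (\<Sum>p\<in>F2. p x) + 2 * (C1 * (\<Sum>p\<in>F1. p x))"
      proof (rule add_mono)
        show "cmod (\<zeta> n x) \<le> C2 * (\<Sum>p\<in>F2. p x)" using C2 x by blast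
        have "cmod (cinner J (e n) (S x)) \<le> 2 * norm (e n) * norm (S x)" by (rule cinner_bound[OF cs])
        also have "\<dots> = 2 * norm (S x)" using gp[of n] by simp
        also have "\<dots> \<le> 2 * (C1 * (\<Sum>p\<in>F1. p x))" using C1 x by simp
        finally show "cmod (cinner J (e n) (S x)) \<le> 2 * (C1 * (\<Sum>p\<in>F1. p x))" .
      qed
      also have "\<dots> \<le> \<bar>C2\<bar> * (\<Sum>p\<in>F1 \<union> F2. p x) + 2 * (\<bar>C1\<bar> * (\<Sum>p\<in>F1 \<union> F2. p x))"
      proof (intro add_mono mult_left_mono)
        show "C2 * (\<Sum>p\<in>F2. p x) \<le> \<bar>C2\<bar> * (\<Sum>p\<in>F1 \<union> F2. p x)"
          using n1 s2 by (meson abs_ge_self abs_ge_zero mult_mono order_trans)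
        show "C1 * (\<Sum>p\<in>F1. p x) \<le> \<bar>C1\<bar> * (\<Sum>p\<in>F1 \<union> F2. p x)"
          using n1 s1 by (meson abs_ge_self abs_ge_zero mult_mono order_trans)
      qed simp
      also have "\<dots> = (\<bar>C2\<bar> + 2 * \<bar>C1\<bar>) * (\<Sum>p\<in>F1 \<union> F2. p x)" by (simp add: algebra_simps)
      finally show "cmod (\<psi> x) \<le> (\<bar>C2\<bar> + 2 * \<bar>C1\<bar>) * (\<Sum>p\<in>F1 \<union> F2. p x)" .
    qed (rule \<eta>)
    then show ?thesis by (simp add: \<psi>_def)
  qed
  show ?thesis
    unfolding bessel_like_def
  proof (intro allI impI)
    fix M assume "lc_bounded P D M"
    then have MD: "M \<subseteq> D" and Mb: "\<forall>p\<in>P. \<exists>C. \<forall>x\<in>M. p x \<le> C" by (auto simp: lc_bounded_def)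
    have "\<forall>p\<in>F1. \<exists>C. \<forall>x\<in>M. p x \<le> C" using Mb F1(1) by blast
    then obtain B where B: "\<forall>p\<in>F1. \<forall>x\<in>M. p x \<le> B p" by (metis bchoice)
    define K where "K = \<bar>C1\<bar> * (\<Sum>p\<in>F1. B p)"
    have nK: "norm (S \<eta>) \<le> K" if "\<eta> \<in> M" for \<eta>
    proof -
      have \<eta>D: "\<eta> \<in> D" using that MD by auto
      have s0: "0 \<le> (\<Sum>p\<in>F1. p \<eta>)" using sumnn F1 \<eta>D by auto
      have sB: "(\<Sum>p\<in>F1. p \<eta>) \<le> (\<Sum>p\<in>F1. B p)" using B that by (intro sum_mono) auto
      have "norm (S \<eta>) \<le> C1 * (\<Sum>p\<in>F1. p \<eta>)" using C1 \<eta>D by blast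
      also have "\<dots> \<le> \<bar>C1\<bar> * (\<Sum>p\<in>F1. B p)"
        using s0 sB by (meson abs_ge_self abs_ge_zero mult_mono order_trans)
      finally show ?thesis unfolding K_def .
    qed
    have ps: "(\<Sum>k<N. (cmod (\<zeta> k \<eta>))\<^sup>2) \<le> K\<^sup>2" if "\<eta> \<in> M" for \<eta> N
    proof -
      have \<eta>D: "\<eta> \<in> D" using that MD by auto
      have "(\<Sum>k<N. (cmod (\<zeta> k \<eta>))\<^sup>2) = (\<Sum>k<N. (cmod (cinner J (e k) (S \<eta>)))\<^sup>2)"
        using eq[OF \<eta>D] by simp
      also have "\<dots> \<le> (norm (S \<eta>))\<^sup>2" by (rule bessel[OF cs o1 o2])
      also have "\<dots> \<le> K\<^sup>2" using nK[OF that] by (intro power_mono) auto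
      finally show ?thesis .
    qed
    show "\<exists>C. \<forall>\<eta>\<in>M. summable (\<lambda>k. (cmod (\<zeta> k \<eta>))\<^sup>2) \<and> (\<Sum>k. (cmod (\<zeta> k \<eta>))\<^sup>2) \<le> C"
    proof (intro exI ballI conjI)
      fix \<eta> assume "\<eta> \<in> M"
      show sm: "summable (\<lambda>k. (cmod (\<zeta> k \<eta>))\<^sup>2)"
        by (rule summableI_nonneg_bounded[where x="K\<^sup>2"]) (use ps[OF \<open>\<eta> \<in> M\<close>] in auto)
      show "(\<Sum>k. (cmod (\<zeta> k \<eta>))\<^sup>2) \<le> K\<^sup>2"
        by (rule suminf_le_const[OF sm]) (use ps[OF \<open>\<eta> \<in> M\<close>] in auto)
    qed
  qed
qed

end
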